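(* Let $\tau,\delta\in W$ be defined recursively by $\tau=(1,\tau)\sigma$ and $\delta=(\delta,\delta)\sigma$. Then $H=\langle\tau,\delta\rangle$ is infinite dihedral, and $N_W(H)=H$.
   Context: $W$ is the isometry group of the binary rooted tree $\{0,1\}^*$. Elements are written $(g_0,g_1)\pi$ with $\pi\in\mathrm{Sym}(\{0,1\})$, meaning $(xw)^{(g_0,g_1)\pi}=x^\pi w^{g_x}$; $\sigma$ is the nontrivial permutation of $\{0,1\}$ acting rigidly at the root. *)

theory Defs
  imports "HOL-Algebra.Algebra"
begin

text \<open>Vertices of the binary rooted tree are words over {0,1}; 0 is False, 1 is True.
  Elements of W act on the right: x^(g h) = (x^g)^h, so the product g h is h \<circ> g.\<close>

type_synonym vertex = "bool list"

definition tree_isometries :: "(vertex \<Rightarrow> vertex) set" where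
  "tree_isometries = {g. bij g \<and>
      (\<forall>u v. \<exists>v'. g (u @ v) = g u @ v' \<and> length v' = length v)}"

definition W :: "(vertex \<Rightarrow> vertex) monoid" where
  "W = \<lparr> carrier = tree_isometries, monoid.mult = (\<lambda>g h. h \<circ> g), monoid.one = id \<rparr>"

text \<open>tau = (1, tau) sigma\<close>
fun tau :: "vertex \<Rightarrow> vertex" where
  "tau [] = []"
| "tau (False # w) = True # w"
| "tau (True # w) = False # tau w"

text \<open>delta = (delta, delta) sigma\<close>
fun delta :: "vertex \<Rightarrow> vertex" where
  "delta [] = []"
| "delta (x # w) = (\<not> x) # delta w"

definition Dinf :: "(int \<times> bool) monoid" where
  "Dinf = \<lparr> carrier = UNIV,
            monoid.mult = (\<lambda>(a, s) (b, t). (a + (if s then - b else b), s \<noteq> t)),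
            monoid.one = (0, False) \<rparr>"

end

theory Submission
  imports Defs
begin

fun val :: "vertex \<Rightarrow> int" where
  "val [] = 0"
| "val (x # w) = (if x then 1 else 0) + 2 * val w"

fun bits :: "nat \<Rightarrow> int \<Rightarrow> vertex" where
  "bits 0 k = []"
| "bits (Suc n) k = (k mod 2 = 1) # bits n (k div 2)"

lemma length_bits[simp]: "length (bits n k) = n"
  by (induction n arbitrary: k) auto

lemma mod2_split: "(k::int) mod (2 * 2^n) = 2 * ((k div 2) mod 2^n) + k mod 2"
  using zmod_zmult2_eq[where a=k and b=2 and c="2^n"] by (simp add: mult.commute)

lemma val_bits[simp]: "val (bits n k) = k mod 2^n"
proof (induction n arbitrary: k)
  case 0 then show ?case by simp
next
  case (Suc n)
  have "k mod 2 = 0 \<or> k mod 2 = 1" by auto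
  then show ?case using Suc mod2_split[of k n] by auto
qed

lemma bits_val[simp]: "bits (length w) (val w) = w"
  by (induction w) auto

lemma val_range: "0 \<le> val w \<and> val w < 2 ^ length w"
  by (induction w) auto

lemma bits_mod: "bits n (k mod 2^n) = bits n k"
proof (induction n arbitrary: k)
  case 0 then show ?case by simp
next
  case (Suc n)
  have a: "(k mod (2*2^n)) mod 2 = k mod 2"
    by (simp add: mod_mod_cancel)
  have b: "(k mod (2*2^n)) div 2 = (k div 2) mod 2^n"
    using mod2_split[of k n] by auto
  show ?case using a b Suc[of "k div 2"] by simp
qed

lemma bits_eq_iff: "bits n x = bits n y \<longleftrightarrow> x mod 2^n = y mod 2^n"
  by (metis bits_mod val_bits)

lemma val_append: "val (u @ v) = val u + 2 ^ length u * val v"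
  by (induction u) (auto simp: algebra_simps)

lemma bits_add: "bits (n + m) k = bits n k @ bits m (k div 2^n)"
proof (induction n arbitrary: k)
  case 0 then show ?case by simp
next
  case (Suc n)
  show ?case using Suc[of "k div 2"] by (simp add: zdiv_zmult2_eq)
qed

definition eps :: "bool \<Rightarrow> int \<Rightarrow> int" where
  "eps s y = (if s then -1 - y else y)"

definition phi :: "int \<Rightarrow> bool \<Rightarrow> vertex \<Rightarrow> vertex" where
  "phi a s w = bits (length w) (eps s (val w + a))"

lemma length_phi[simp]: "length (phi a s w) = length w"
  by (simp add: phi_def)

lemma mod_help: "((c::int) - (x mod m + b)) mod m = (c - (x + b)) mod m"
  by (metis mod_add_left_eq mod_diff_right_eq)

lemma phi_comp: "phi b t (phi a s w) = phi (a + (if s then -b else b)) (s \<noteq> t) w"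
  apply (cases s; cases t)
  apply (simp_all add: phi_def bits_eq_iff eps_def mod_help mod_simps)
  apply (simp_all add: algebra_simps)
  done

lemma phi_id: "phi 0 False w = w"
  by (simp add: phi_def eps_def)

lemma tau_phi: "tau w = phi 1 False w"
proof (induction w)
  case Nil then show ?case by (simp add: phi_def)
next
  case (Cons x w)
  then show ?case by (cases x) (auto simp: phi_def eps_def ac_simps)
qed

lemma delta_phi: "delta w = phi 0 True w"
proof (induction w)
  case Nil then show ?case by (simp add: phi_def)
next
  case (Cons x w)
  have e1: "(-2 - 2 * val w) div 2 = -1 - val w" by simp
  have e2: "(-1 - 2 * val w) div 2 = -1 - val w" by simp
  have e3: "(-1 - 2 * val w) mod 2 = 1" by presburger
  from Cons show ?case by (cases x) (auto simp: phi_def eps_def e1 e2 e3)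
qed

lemma iso_basic:
  assumes "g \<in> tree_isometries"
  shows "g [] = [] \<and> (\<forall>w. length (g w) = length w)"
proof -
  have b: "bij g" and p: "\<And>u v. \<exists>v'. g (u @ v) = g u @ v' \<and> length v' = length v"
    using assms by (auto simp: tree_isometries_def)
  obtain y where y: "g y = []" using b by (metis bij_pointE)
  obtain v' where "g ([] @ y) = g [] @ v'" using p by blast
  then have g0: "g [] = []" using y by simp
  have "length (g w) = length w" for w
    using p[of "[]" w] g0 by auto
  with g0 show ?thesis by blast
qed

lemma iso_len: "g \<in> tree_isometries \<Longrightarrow> length (g w) = length w"
  using iso_basic by blast

lemma mod_h1: "((c::int) - (a + (x + y * m))) mod m = (c - (a + x)) mod m"
proof -
  have "c - (a + (x + y * m)) = (c - (a + x)) + (- y) * m" by (simp add: algebra_simps)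
  then show ?thesis by (simp only: mod_mult_self1)
qed

lemma mod_h2: "((a::int) + (x + y * m)) mod m = (a + x) mod m"
proof -
  have "a + (x + y * m) = (a + x) + y * m" by (simp add: algebra_simps)
  then show ?thesis by (simp only: mod_mult_self1)
qed

lemma phi_prefix: "\<exists>v'. phi a s (u @ v) = phi a s u @ v' \<and> length v' = length v"
proof -
  let ?E = "eps s (val (u @ v) + a)"
  have "phi a s (u @ v) = bits (length u) ?E @ bits (length v) (?E div 2 ^ length u)"
    unfolding phi_def by (simp add: bits_add)
  moreover have "bits (length u) ?E = phi a s u"
    unfolding phi_def bits_eq_iff val_append
    by (simp add: eps_def mod_h1 mod_h2 algebra_simps)
  ultimately show ?thesis by auto
qed

lemma phi_carrier: "phi a s \<in> carrier W"
proof -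
  have "phi (if s then a else -a) s \<circ> phi a s = id"
    by (rule ext) (simp add: phi_comp phi_id)
  moreover have "phi a s \<circ> phi (if s then a else -a) s = id"
    by (rule ext) (simp add: phi_comp phi_id)
  ultimately have "bij (phi a s)" using o_bij by blast
  then show ?thesis using phi_prefix by (auto simp: W_def tree_isometries_def)
qed

lemma tau_carrier: "tau \<in> carrier W"
proof -
  have "tau = phi 1 False" using tau_phi by blast
  then show ?thesis using phi_carrier by metis
qed

lemma delta_carrier: "delta \<in> carrier W"
proof -
  have "delta = phi 0 True" using delta_phi by blast
  then show ?thesis using phi_carrier by metis
qed

lemma comp_iso: "f \<in> tree_isometries \<Longrightarrow> g \<in> tree_isometries \<Longrightarrow> g \<circ> f \<in> tree_isometries"
proof -
  assume f: "f \<in> tree_isometries" and g: "g \<in> tree_isometries"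
  have "bij (g \<circ> f)" using f g by (auto simp: tree_isometries_def intro: bij_comp)
  moreover have "\<exists>v'. (g \<circ> f) (u @ v) = (g \<circ> f) u @ v' \<and> length v' = length v" for u v
  proof -
    obtain v1 where "f (u @ v) = f u @ v1" "length v1 = length v"
      using f by (auto simp: tree_isometries_def)
    moreover obtain v2 where "g (f u @ v1) = g (f u) @ v2" "length v2 = length v1"
      using g by (auto simp: tree_isometries_def)
    ultimately show ?thesis by auto
  qed
  ultimately show ?thesis by (simp add: tree_isometries_def)
qed

lemma inv_iso: "g \<in> tree_isometries \<Longrightarrow> inv_into UNIV g \<in> tree_isometries"
proof -
  assume g: "g \<in> tree_isometries"
  have b: "bij g" using g by (simp add: tree_isometries_def)
  have "\<exists>v'. inv_into UNIV g (u @ v) = inv_into UNIV g u @ v' \<and> length v' = length v" for u v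
  proof -
    define b' where "b' = inv_into UNIV g (u @ v)"
    have gb: "g b' = u @ v" unfolding b'_def using b by (simp add: bij_is_surj surj_f_inv_f)
    have lb: "length b' = length u + length v" using iso_len[OF g, of b'] gb by simp
    obtain v' where v': "g (take (length u) b' @ drop (length u) b') = g (take (length u) b') @ v'"
        "length v' = length (drop (length u) b')"
      using g[unfolded tree_isometries_def] by blast
    have "g (take (length u) b') @ v' = u @ v" using v' gb by simp
    moreover have "length (g (take (length u) b')) = length u"
      using iso_len[OF g] lb by simp
    ultimately have "g (take (length u) b') = u" by simp
    then have "take (length u) b' = inv_into UNIV g u" using b by (metis bij_is_inj inv_f_f)
    then have "b' = inv_into UNIV g u @ drop (length u) b'" by (metis append_take_drop_id)
    then show ?thesis using lb unfolding b'_def by auto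
  qed
  moreover have "bij (inv_into UNIV g)" using b by (simp add: bij_imp_bij_inv)
  ultimately show ?thesis by (simp add: tree_isometries_def)
qed

lemma id_iso': "id \<in> tree_isometries"
  by (simp add: tree_isometries_def)

lemma group_W: "group W"
proof (rule groupI)
  fix x assume x: "x \<in> carrier W"
  then have "inv_into UNIV x \<in> carrier W" by (simp add: W_def inv_iso)
  moreover have "inv_into UNIV x \<otimes>\<^bsub>W\<^esub> x = \<one>\<^bsub>W\<^esub>"
    using x by (simp add: W_def tree_isometries_def) (meson bij_is_surj surj_iff)
  ultimately show "\<exists>y\<in>carrier W. y \<otimes>\<^bsub>W\<^esub> x = \<one>\<^bsub>W\<^esub>" by blast
qed (auto simp: W_def comp_iso id_iso')

lemma group_Dinf: "group Dinf"
proof (rule groupI)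
  fix x assume "x \<in> carrier Dinf"
  obtain a s where x: "x = (a, s)" by (cases x)
  have "(if s then a else -a, s) \<otimes>\<^bsub>Dinf\<^esub> x = \<one>\<^bsub>Dinf\<^esub>" by (simp add: Dinf_def x)
  then show "\<exists>y\<in>carrier Dinf. y \<otimes>\<^bsub>Dinf\<^esub> x = \<one>\<^bsub>Dinf\<^esub>" by (auto simp: Dinf_def)
qed (auto simp: Dinf_def split: prod.splits)

definition phiD :: "int \<times> bool \<Rightarrow> vertex \<Rightarrow> vertex" where
  "phiD p = phi (fst p) (snd p)"

lemma phiD_hom: "phiD \<in> hom Dinf W"
  unfolding hom_def
proof (intro CollectI conjI ballI)
  show "phiD \<in> carrier Dinf \<rightarrow> carrier W" by (simp add: phiD_def phi_carrier)
  fix x y assume "x \<in> carrier Dinf" "y \<in> carrier Dinf"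
  obtain a s b t where "x = (a, s)" "y = (b, t)" by (cases x, cases y)
  then show "phiD (x \<otimes>\<^bsub>Dinf\<^esub> y) = phiD x \<otimes>\<^bsub>W\<^esub> phiD y"
    by (auto simp: phiD_def Dinf_def W_def phi_comp)
qed

lemma group_hom_phiD: "group_hom Dinf W phiD"
  using group_Dinf group_W phiD_hom by (simp add: group_hom_def group_hom_axioms_def)

lemma tau_eq: "tau = phi 1 False" using tau_phi by blast
lemma delta_eq: "delta = phi 0 True" using delta_phi by blast

lemma phi_bits: "phi a s (bits n k) = bits n (eps s (k + a))"
  by (cases s) (simp_all add: phi_def bits_eq_iff eps_def mod_simps mod_help)

lemma pow_dvd_zero:
  fixes c :: int
  assumes "\<And>n. 2 ^ n dvd c"
  shows "c = 0"
proof (rule ccontr)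
  assume c: "c \<noteq> 0"
  let ?n = "nat \<bar>c\<bar>"
  have "\<bar>(2::int) ^ ?n\<bar> \<le> \<bar>c\<bar>" using dvd_imp_le_int[OF c assms[of ?n]] .
  moreover have "int ?n < 2 ^ ?n" by (metis of_nat_less_two_power)
  ultimately show False by simp
qed

lemma phi_id_iff:
  assumes "\<And>w. phi c r w = w"
  shows "c = 0 \<and> r = False"
proof (cases r)
  case True
  have "bits 2 (-1 - c) = bits 2 0" using assms[of "bits 2 0"] True by (simp add: phi_bits eps_def)
  moreover have "bits 2 (-1 - (1 + c)) = bits 2 1" using assms[of "bits 2 1"] True by (simp add: phi_bits eps_def)
  ultimately have "(-1 - c) mod 4 = 0" "(- c - 2) mod 4 = 1" by (simp_all add: bits_eq_iff algebra_simps)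
  then show ?thesis by presburger
next
  case False
  have "bits n c = bits n 0" for n using assms[of "bits n 0"] False by (simp add: phi_bits eps_def)
  then have "2 ^ n dvd c" for n by (simp add: bits_eq_iff mod_eq_0_iff_dvd)
  then show ?thesis using False pow_dvd_zero by blast
qed

lemma phi_inv_l: "phi (if s then a else -a) s (phi a s w) = w"
  by (simp add: phi_comp phi_id)

lemma phi_inj:
  assumes "\<And>w. phi a s w = phi b t w"
  shows "a = b \<and> s = t"
proof -
  have "phi (if t then b else -b) t (phi a s w) = w" for w
    using assms phi_inv_l by metis
  then have "phi (a + (if s then - (if t then b else -b) else (if t then b else -b))) (s \<noteq> t) w = w" for w
    by (simp add: phi_comp)
  from phi_id_iff[OF this] show ?thesis by (cases s; cases t) auto
qed

lemma iter:
  assumes A: "\<And>w. phi p False (f w) = f (phi q False w)"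
  shows "phi (k * p) False (f w) = f (phi (k * q) False w)"
proof (induction k arbitrary: w rule: int_induct[where k=0])
  case base then show ?case by (simp add: phi_id)
next
  case (step1 i)
  have "phi ((i + 1) * p) False (f w) = phi p False (phi (i * p) False (f w))"
    by (simp add: phi_comp algebra_simps)
  also have "\<dots> = f (phi q False (phi (i * q) False w))" using step1 A by simp
  also have "\<dots> = f (phi ((i + 1) * q) False w)" by (simp add: phi_comp algebra_simps)
  finally show ?case .
next
  case (step2 i)
  have m: "phi (-p) False (f v) = f (phi (-q) False v)" for v
  proof -
    have "phi p False (f (phi (-q) False v)) = f v" using A by (simp add: phi_comp phi_id)
    then have "phi (-p) False (phi p False (f (phi (-q) False v))) = phi (-p) False (f v)" by simp
    then show ?thesis by (simp add: phi_comp phi_id)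
  qed
  have "phi ((i - 1) * p) False (f w) = phi (i * p) False (phi (-p) False (f w))"
    by (simp add: phi_comp algebra_simps)
  also have "\<dots> = f (phi (i * q) False (phi (-q) False w))" using step2 m by simp
  also have "\<dots> = f (phi ((i - 1) * q) False w)" by (simp add: phi_comp algebra_simps)
  finally show ?case .
qed

lemma main_fun:
  assumes g: "g \<in> tree_isometries"
  and A: "\<And>w. phi 1 False (g w) = g (phi a s w)"
  and B: "\<And>w. g (phi 1 False w) = phi a2 s2 (g w)"
  and C: "\<And>w. phi 0 True (g w) = g (phi b t w)"
  shows "\<exists>c r. g = phi c r"
proof -
  have bg: "bij g" using g by (simp add: tree_isometries_def)
  have inj: "g x = g y \<Longrightarrow> x = y" for x y using bg by (simp add: bij_def inj_eq)
  have surj: "\<exists>x. g x = y" for y using bg by (metis bij_pointE)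
  have len: "length (g w) = length w" for w using iso_len[OF g] .
  have ne: "phi 2 False (bits 2 0) \<noteq> bits 2 0" by (simp add: phi_bits eps_def bits_eq_iff)
  have sF: "s = False"
  proof (rule ccontr)
    assume "s \<noteq> False"
    then have sT: "s" by simp
    have "phi 1 False (phi 1 False (g w)) = g w" for w
      using A sT by (simp add: phi_comp phi_id)
    then have "phi 2 False v = v" for v using surj by (metis phi_comp one_add_one)
    then show False using ne by blast
  qed
  have s2F: "s2 = False"
  proof (rule ccontr)
    assume "s2 \<noteq> False"
    then have sT: "s2" by simp
    have "g (phi 1 False (phi 1 False w)) = g w" for w
    proof -
      have "g (phi 1 False (phi 1 False w)) = phi a2 s2 (phi a2 s2 (g w))" by (simp add: B)
      also have "\<dots> = g w" using sT by (simp add: phi_comp phi_id)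
      finally show ?thesis .
    qed
    then have "phi 2 False v = v" for v using inj by (metis phi_comp one_add_one)
    then show False using ne by blast
  qed
  have tT: "t = True"
  proof (rule ccontr)
    assume "t \<noteq> True"
    then have tF: "\<not> t" by simp
    have "g w = g (phi (b + b) False w)" for w
    proof -
      have "g w = phi 0 True (phi 0 True (g w))" by (simp add: phi_comp phi_id)
      also have "\<dots> = g (phi b False (phi b False w))" using C tF by simp
      finally show ?thesis by (simp add: phi_comp)
    qed
    then have "phi (b + b) False w = phi 0 False w" for w using inj phi_id by metis
    then have "b + b = 0" using phi_inj by blast
    then have b0: "b = 0" by simp
    obtain x where x: "g x = bits 1 0" using surj by blast
    have "phi 0 True (g x) = g x" using C[of x] tF b0 by (simp add: phi_id)
    then show False using x by (simp add: phi_def eps_def)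
  qed
  have A': "phi 1 False (g w) = g (phi a False w)" for w using A sF by simp
  have B': "phi a2 False (g w) = g (phi 1 False w)" for w using B s2F by simp
  have C': "phi 0 True (g w) = g (phi b True w)" for w using C tT by simp
  have "phi (a * a2) False (g w) = g (phi (a * 1) False w)" for w
    using iter[of a2 g 1 a, OF B'] by (simp add: mult.commute)
  then have "phi (a * a2) False v = phi 1 False v" for v using A' surj by (metis mult_1_right)
  then have "a * a2 = 1" using phi_inj by blast
  then have a1: "a = 1 \<or> a = -1" unfolding zmult_eq_1_iff by blast
  then have aa: "a * a = 1" by auto
  define z where "z n = val (g (bits n 0))" for n
  have gz: "g (bits n j) = bits n (z n + a * j)" for n j
  proof -
    have "phi (j * a * 1) False (g (bits n 0)) = g (phi (j * a * a) False (bits n 0))"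
      using iter[of 1 g a "j * a", OF A'] by simp
    also have "j * a * a = j" using aa by (simp add: mult.assoc)
    finally have "g (bits n j) = phi (j * a) False (g (bits n 0))" by (simp add: phi_bits eps_def)
    then show ?thesis by (simp add: phi_def z_def len eps_def algebra_simps)
  qed
  define d where "d = a * (1 + b) - 1"
  have dz: "2 ^ n dvd (2 * z n - d)" for n
  proof -
    have "bits n (-1 - z n) = bits n (z n + a * (-1 - b))"
      using C'[of "bits n 0"] gz[of n 0] gz[of n "-1 - b"] by (simp add: phi_bits eps_def)
    then have "2 ^ n dvd ((-1 - z n) - (z n + a * (-1 - b)))"
      by (simp add: bits_eq_iff mod_eq_dvd_iff)
    moreover have "(-1 - z n) - (z n + a * (-1 - b)) = - (2 * z n - d)"
      by (simp add: d_def algebra_simps)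
    ultimately show ?thesis by (metis dvd_minus_iff)
  qed
  have "2 dvd d" using dz[of 1] by (simp add: dvd_diff_commute)
  then obtain c where c: "d = 2 * c" by blast
  have cons: "2 ^ n dvd (z (Suc n) - z n)" for n
  proof -
    have "bits (n + 1) 0 = bits n 0 @ bits 1 0" using bits_add[of n 1 0] by simp
    moreover obtain v' where "g (bits n 0 @ bits 1 0) = g (bits n 0) @ v'"
      using g[unfolded tree_isometries_def] by blast
    ultimately have "z (Suc n) = z n + 2 ^ n * val v'"
      by (simp add: z_def val_append len)
    then show ?thesis by simp
  qed
  have zc: "2 ^ n dvd (z n - c)" for n
  proof -
    have "2 ^ n * 2 dvd 2 * (z (Suc n) - c)" using dz[of "Suc n"] c by (simp add: algebra_simps)
    then have "2 ^ n dvd z (Suc n) - c" by (metis mult.commute dvd_mult_cancel_left zero_neq_numeral)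
    then have "2 ^ n dvd (z (Suc n) - c) - (z (Suc n) - z n)" using cons dvd_diff by blast
    then show ?thesis by simp
  qed
  have gw: "g w = bits (length w) (c + a * val w)" for w
  proof -
    have "g w = g (bits (length w) (val w))" by simp
    also have "\<dots> = bits (length w) (z (length w) + a * val w)" using gz by blast
    also have "\<dots> = bits (length w) (c + a * val w)"
      using zc[of "length w"] by (simp add: bits_eq_iff mod_eq_dvd_iff)
    finally show ?thesis .
  qed
  from a1 show ?thesis
  proof
    assume "a = 1"
    then have "g = phi c False" by (auto simp: gw phi_def eps_def algebra_simps)
    then show ?thesis by blast
  next
    assume "a = -1"
    then have "g = phi (-1 - c) True" by (auto simp: gw phi_def eps_def algebra_simps)
    then show ?thesis by blast
  qed
qed

lemma phi_iso: "phi a s \<in> tree_isometries"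
  using phi_carrier by (simp add: W_def)

lemma H_eq: "generate W {tau, delta} = range phiD"
proof
  interpret GW: group W by (rule group_W)
  interpret GH: group_hom Dinf W phiD by (rule group_hom_phiD)
  show "generate W {tau, delta} \<subseteq> range phiD"
  proof (rule GW.generate_subgroup_incl)
    have "tau = phiD (1, False)" "delta = phiD (0, True)" by (simp_all add: phiD_def tau_eq delta_eq)
    then show "{tau, delta} \<subseteq> range phiD" by auto
    show "subgroup (range phiD) W" using GH.img_is_subgroup by (simp add: Dinf_def)
  qed
  let ?S = "generate W {tau, delta}"
  have sub: "subgroup ?S W" using GW.generate_is_subgroup tau_carrier delta_carrier by simp
  have tS: "tau \<in> ?S" and dS: "delta \<in> ?S" by (auto intro: generate.incl)
  have invt: "inv\<^bsub>W\<^esub> tau = phi (-1) False"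
    by (rule GW.inv_equality) (auto simp: W_def tau_eq phi_iso phi_comp phi_id fun_eq_iff)
  have F: "phi k False \<in> ?S" for k
  proof (induction k rule: int_induct[where k=0])
    case base
    have "phi 0 False = \<one>\<^bsub>W\<^esub>" by (simp add: W_def fun_eq_iff phi_id)
    then show ?case using subgroup.one_closed[OF sub] by simp
  next
    case (step1 i)
    have "phi (i + 1) False = phi i False \<otimes>\<^bsub>W\<^esub> tau"
      by (simp add: W_def tau_eq fun_eq_iff phi_comp add.commute)
    then show ?case using subgroup.m_closed[OF sub step1(2) tS] by simp
  next
    case (step2 i)
    have "phi (i - 1) False = phi i False \<otimes>\<^bsub>W\<^esub> inv\<^bsub>W\<^esub> tau"
      unfolding invt by (simp add: W_def fun_eq_iff phi_comp)
    then show ?case using subgroup.m_closed[OF sub step2(2) subgroup.m_inv_closed[OF sub tS]] by simp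
  qed
  show "range phiD \<subseteq> ?S"
  proof
    fix x assume "x \<in> range phiD"
    then obtain k r where x: "x = phi k r" by (auto simp: phiD_def)
    show "x \<in> ?S"
    proof (cases r)
      case False then show ?thesis using F x by simp
    next
      case True
      have "phi k True = phi k False \<otimes>\<^bsub>W\<^esub> delta"
        by (simp add: W_def delta_eq fun_eq_iff phi_comp)
      then show ?thesis using subgroup.m_closed[OF sub F dS] x True by simp
    qed
  qed
qed

lemma inj_phiD: "inj phiD"
proof (rule injI)
  fix x y assume "phiD x = phiD y"
  moreover obtain a s b t where "x = (a, s)" "y = (b, t)" by (cases x, cases y)
  ultimately have "phi a s = phi b t" "x = (a, s)" "y = (b, t)" by (simp_all add: phiD_def)
  then show "x = y" using phi_inj[of a s b t] by simp
qed

lemma iso_part: "W\<lparr>carrier := generate W {tau, delta}\<rparr> \<cong> Dinf"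
proof -
  have "phiD \<in> iso Dinf (W\<lparr>carrier := generate W {tau, delta}\<rparr>)"
  proof (rule isoI)
    show "phiD \<in> hom Dinf (W\<lparr>carrier := generate W {tau, delta}\<rparr>)"
      using phiD_hom unfolding hom_def H_eq by (auto simp: Dinf_def)
    show "bij_betw phiD (carrier Dinf) (carrier (W\<lparr>carrier := generate W {tau, delta}\<rparr>))"
      using inj_phiD by (simp add: H_eq Dinf_def bij_betw_def)
  qed
  then have "Dinf \<cong> W\<lparr>carrier := generate W {tau, delta}\<rparr>" by (rule is_isoI)
  then show ?thesis using group.iso_sym[OF group_Dinf] by blast
qed

lemma coset_W: "g <#\<^bsub>W\<^esub> K #>\<^bsub>W\<^esub> x = (\<lambda>h. x \<circ> h \<circ> g) ` K"
  by (auto simp: l_coset_def r_coset_def W_def image_iff o_assoc)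

lemma normalizer_part: "normalizer W (generate W {tau, delta}) = generate W {tau, delta}"
proof
  interpret GW: group W by (rule group_W)
  let ?H = "generate W {tau, delta}"
  have subH: "subgroup ?H W" using GW.generate_is_subgroup tau_carrier delta_carrier by simp
  show "?H \<subseteq> normalizer W ?H"
    using GW.subgroup_in_normalizer[OF subH] normal_imp_subgroup subgroup.subset by fastforce
  show "normalizer W ?H \<subseteq> ?H"
  proof
    fix g assume gN: "g \<in> normalizer W ?H"
    have Hc: "?H \<subseteq> carrier W" using subgroup.subset[OF subH] .
    have gc: "g \<in> carrier W" and eq: "g <#\<^bsub>W\<^esub> ?H #>\<^bsub>W\<^esub> inv\<^bsub>W\<^esub> g = ?H"
      using gN Hc by (auto simp: normalizer_def stabilizer_def)
    define gi where "gi = inv\<^bsub>W\<^esub> g"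
    have gic: "gi \<in> carrier W" using gc gi_def by simp
    have "g \<otimes>\<^bsub>W\<^esub> gi = \<one>\<^bsub>W\<^esub>" using gc gi_def by simp
    then have l: "gi (g w) = w" for w by (simp add: W_def fun_eq_iff)
    have "gi \<otimes>\<^bsub>W\<^esub> g = \<one>\<^bsub>W\<^esub>" using gc gi_def by simp
    then have r: "g (gi w) = w" for w by (simp add: W_def fun_eq_iff)
    have eq': "(\<lambda>h. gi \<circ> h \<circ> g) ` range phiD = range phiD"
      using eq unfolding coset_W gi_def[symmetric] H_eq .
    have tH: "tau \<in> range phiD" and dH: "delta \<in> range phiD"
      by (auto simp: phiD_def tau_eq delta_eq image_iff intro!: exI[where x="(1, False)"] exI[where x="(0, True)"])
    have "gi \<circ> tau \<circ> g \<in> range phiD" using eq' tH by blast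
    then obtain p where "gi \<circ> tau \<circ> g = phiD p" by blast
    then obtain a s where as: "gi \<circ> tau \<circ> g = phi a s" by (simp add: phiD_def)
    have A: "phi 1 False (g w) = g (phi a s w)" for w
      using fun_cong[OF as, of w] r by (metis comp_apply tau_eq)
    have "tau \<in> (\<lambda>h. gi \<circ> h \<circ> g) ` range phiD" using eq' tH by simp
    then obtain p2 where "tau = gi \<circ> phiD p2 \<circ> g" by blast
    then obtain a2 s2 where as2: "tau = gi \<circ> phi a2 s2 \<circ> g" by (simp add: phiD_def)
    have B: "g (phi 1 False w) = phi a2 s2 (g w)" for w
      using fun_cong[OF as2, of w] r by (metis comp_apply tau_eq)
    have "gi \<circ> delta \<circ> g \<in> range phiD" using eq' dH by blast
    then obtain p' where "gi \<circ> delta \<circ> g = phiD p'" by blast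
    then obtain b t where bt: "gi \<circ> delta \<circ> g = phi b t" by (simp add: phiD_def)
    have C: "phi 0 True (g w) = g (phi b t w)" for w
      using fun_cong[OF bt, of w] r by (metis comp_apply delta_eq)
    have "g \<in> tree_isometries" using gc by (simp add: W_def)
    from main_fun[OF this A B C] obtain c r' where "g = phi c r'" by blast
    then have "g = phiD (c, r')" by (simp add: phiD_def)
    then show "g \<in> ?H" unfolding H_eq by simp
  qed
qed

theorem theorem4p12:
  defines "H \<equiv> generate W {tau, delta}"
  shows "tau \<in> carrier W \<and> delta \<in> carrier W
    \<and> W\<lparr>carrier := H\<rparr> \<cong> Dinf
    \<and> normalizer W H = H"
  unfolding H_def using tau_carrier delta_carrier iso_part normalizer_part by blast

end
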